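(* Let $m \ge 2$ be a natural number and let $\tilde{\boldsymbol{\theta}}^m$ be a finite nonempty dataset of angles that has period $2\pi/m$. Then for every natural number $p$: $$\nu_p(\tilde{\boldsymbol{\theta}}^m) = 1 \quad \text{if } p \le m-1, \qquad 0 \le \nu_p(\tilde{\boldsymbol{\theta}}^m) \le 1 \quad \text{if } p = m.$$
   Context: A dataset of angles is a finite nonempty multiset $\boldsymbol{\theta} = \{\theta_j \mid j = 1, \dots, N\}$ of real numbers (angles in radians). For $p \in \mathbb{N} = \{1,2,\dots\}$, the $p$th angular variance is $\nu_p(\boldsymbol{\theta}) = 1 - \bar{R}_p$, where $\bar{R}_p = \sqrt{\bar{C}_p^2 + \bar{S}_p^2}$, $\bar{C}_p = \frac{1}{N}\sum_{j=1}^N \cos(p\theta_j)$, $\bar{S}_p = \frac{1}{N}\sum_{j=1}^N \sin(p\theta_j)$. A dataset has period $2\pi/m$ if, as a multiset of angles modulo $2\pi$, it is invariant under the rotation $\theta \mapsto \theta + 2\pi/m$. *)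

theory Defs
  imports Complex_Main "HOL-Library.Multiset"
begin

definition meanC :: "nat \<Rightarrow> real multiset \<Rightarrow> real" where
  "meanC p D = (\<Sum>\<^sub># (image_mset (\<lambda>\<theta>. cos (real p * \<theta>)) D)) / real (size D)"

definition meanS :: "nat \<Rightarrow> real multiset \<Rightarrow> real" where
  "meanS p D = (\<Sum>\<^sub># (image_mset (\<lambda>\<theta>. sin (real p * \<theta>)) D)) / real (size D)"

definition meanR :: "nat \<Rightarrow> real multiset \<Rightarrow> real" where
  "meanR p D = sqrt ((meanC p D)\<^sup>2 + (meanS p D)\<^sup>2)"

definition ang_var :: "nat \<Rightarrow> real multiset \<Rightarrow> real" where
  "ang_var p D = 1 - meanR p D"

definition mod2pi :: "real \<Rightarrow> real" where
  "mod2pi x = x - 2 * pi * of_int \<lfloor>x / (2 * pi)\<rfloor>"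

definition has_period :: "nat \<Rightarrow> real multiset \<Rightarrow> bool" where
  "has_period m D \<longleftrightarrow>
     image_mset (\<lambda>\<theta>. mod2pi (\<theta> + 2 * pi / real m)) D = image_mset mod2pi D"

end

theory Submission
  imports Defs
begin

definition Zs :: "nat \<Rightarrow> real multiset \<Rightarrow> complex" where
  "Zs p D = \<Sum>\<^sub># (image_mset (\<lambda>\<theta>. cis (real p * \<theta>)) D)"

lemma Re_Zs: "Re (Zs p D) = \<Sum>\<^sub># (image_mset (\<lambda>\<theta>. cos (real p * \<theta>)) D)"
  unfolding Zs_def by (induction D) auto

lemma Im_Zs: "Im (Zs p D) = \<Sum>\<^sub># (image_mset (\<lambda>\<theta>. sin (real p * \<theta>)) D)"
  unfolding Zs_def by (induction D) auto

lemma norm_Zs: "cmod (Zs p D) \<le> real (size D)"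
  unfolding Zs_def
proof (induction D)
  case empty then show ?case by simp
next
  case (add x D)
  have "cmod (cis (real p * x) + \<Sum>\<^sub># (image_mset (\<lambda>\<theta>. cis (real p * \<theta>)) D))
     \<le> cmod (cis (real p * x)) + cmod (\<Sum>\<^sub># (image_mset (\<lambda>\<theta>. cis (real p * \<theta>)) D))"
    by (rule norm_triangle_ineq)
  then show ?case using add by (simp add: norm_cis)
qed

lemma meanR_Zs: "meanR p D = cmod (Zs p D) / real (size D)"
proof -
  have "meanR p D = sqrt ((Re (Zs p D) / real (size D))\<^sup>2 + (Im (Zs p D) / real (size D))\<^sup>2)"
    unfolding meanR_def meanC_def meanS_def Re_Zs Im_Zs by simp
  also have "\<dots> = sqrt (((Re (Zs p D))\<^sup>2 + (Im (Zs p D))\<^sup>2) / (real (size D))\<^sup>2)"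
    by (simp add: power_divide add_divide_distrib)
  also have "\<dots> = cmod (Zs p D) / real (size D)"
    by (simp add: real_sqrt_divide cmod_def)
  finally show ?thesis .
qed

lemma cis_mod2pi: "cis (real p * mod2pi x) = cis (real p * x)"
proof -
  define k where "k = \<lfloor>x / (2 * pi)\<rfloor>"
  have "real p * mod2pi x = real p * x + 2 * pi * of_int (- (int p * k))"
    unfolding mod2pi_def k_def by (simp add: algebra_simps)
  then have "cis (real p * mod2pi x) = cis (real p * x) * cis (2 * pi * of_int (- (int p * k)))"
    by (simp add: cis_mult)
  also have "cis (2 * pi * of_int (- (int p * k))) = 1"
    by (rule cis_multiple_2pi) simp
  finally show ?thesis by simp
qed

lemma Zs_rot:
  assumes "has_period m D"
  shows "cis (real p * (2 * pi / real m)) * Zs p D = Zs p D"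
proof -
  have "image_mset (\<lambda>x. cis (real p * x)) (image_mset (\<lambda>\<theta>. mod2pi (\<theta> + 2 * pi / real m)) D)
      = image_mset (\<lambda>x. cis (real p * x)) (image_mset mod2pi D)"
    using assms unfolding has_period_def by simp
  then have "image_mset (\<lambda>\<theta>. cis (real p * (\<theta> + 2 * pi / real m))) D
      = image_mset (\<lambda>\<theta>. cis (real p * \<theta>)) D"
    by (simp add: image_mset.compositionality o_def cis_mod2pi)
  then have "\<Sum>\<^sub># (image_mset (\<lambda>\<theta>. cis (real p * (\<theta> + 2 * pi / real m))) D) = Zs p D"
    unfolding Zs_def by simp
  moreover have "image_mset (\<lambda>\<theta>. cis (real p * (\<theta> + 2 * pi / real m))) D
     = image_mset (\<lambda>\<theta>. cis (real p * (2 * pi / real m)) * cis (real p * \<theta>)) D"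
    by (simp add: cis_mult algebra_simps)
  ultimately show ?thesis unfolding Zs_def by (simp add: sum_mset_distrib_left)
qed

lemma cis_ne1:
  assumes "1 \<le> p" "p < m"
  shows "cis (real p * (2 * pi / real m)) \<noteq> 1"
proof
  assume "cis (real p * (2 * pi / real m)) = 1"
  then have "cos (real p * (2 * pi / real m)) = 1"
    by (metis cis.sel(1) one_complex.sel(1))
  then obtain n :: int where n: "real p * (2 * pi / real m) = real_of_int n * 2 * pi"
    by (auto simp: cos_one_2pi_int)
  have mpos: "real m > 0" using assms by simp
  have "real p = real_of_int n * real m"
    using n mpos by (simp add: field_simps)
  then have "real_of_int (int p) = real_of_int (n * int m)" by simp
  then have e: "int p = n * int m" by (rule of_int_eq_iff[THEN iffD1])
  show False
  proof (cases "n \<ge> 1")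
    case True
    then have "n * int m \<ge> 1 * int m" by (intro mult_right_mono) auto
    then show False using e assms by linarith
  next
    case False
    then have "n \<le> 0" by simp
    then have "n * int m \<le> 0" by (simp add: mult_nonpos_nonneg)
    then show False using e assms by linarith
  qed
qed

theorem theorem1:
  fixes m p :: nat and D :: "real multiset"
  assumes "m \<ge> 2" and "D \<noteq> {#}" and "has_period m D" and "p \<ge> 1"
  shows "(p \<le> m - 1 \<longrightarrow> ang_var p D = 1) \<and>
         (p = m \<longrightarrow> 0 \<le> ang_var p D \<and> ang_var p D \<le> 1)"
proof (intro conjI impI)
  assume "p \<le> m - 1"
  then have "p < m" using assms(1) by simp
  have "(cis (real p * (2 * pi / real m)) - 1) * Zs p D = 0"
    using Zs_rot[OF assms(3), of p] by (simp add: algebra_simps)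
  then have "Zs p D = 0" using cis_ne1[OF assms(4) \<open>p < m\<close>] by simp
  then show "ang_var p D = 1" unfolding ang_var_def meanR_Zs by simp
next
  have sz: "real (size D) > 0" using assms(2) by (simp add: nonempty_has_size)
  have "meanR p D \<le> 1" unfolding meanR_Zs using norm_Zs[of p D] sz by simp
  moreover have "meanR p D \<ge> 0" unfolding meanR_Zs using sz by simp
  ultimately show "0 \<le> ang_var p D" "ang_var p D \<le> 1" unfolding ang_var_def by auto
qed

end
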